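(* Let $0<p<\infty$, $\alpha>1$, and let $\beta$ be real with $\beta p<-1$ and $\nu:=-(\alpha+\beta+\frac1p)>0$. Let $K>1$ be sufficiently large, $\delta_n=K^{-n}$, $f_n(z)=\delta_n^\nu(1+\delta_n-z)^\beta$ ($z\in\mathbb{D}$), and $X_{\nu,\beta}=\{\sum_{n=1}^\infty a_nf_n:(a_n)\in\ell_\infty\}$. Let $(\varphi_t)$ be a semigroup of analytic functions with Denjoy–Wolff point $1$, whose infinitesimal generator is $G(z)=(1-z)^2P(z)$ with $P$ analytic on $\mathbb{D}$ and $\mathrm{Re}\,P\ge0$, and let $E=\{h\in H(p,\infty,\alpha):(1-z)^2P(z)h'(z)\in H(p,\infty,\alpha)\}$. Then $X_{\nu,\beta}\subseteq E$.
   Context: $\mathbb{D}$ is the unit disk; powers use the principal branch. A semigroup of analytic functions is a family $\{\varphi_t:t\ge0\}$ of analytic self-maps of $\mathbb{D}$ with $\varphi_0=\mathrm{id}$, $\varphi_{t+s}=\varphi_t\circ\varphi_s$, $\varphi_t\to\varphi_0$ locally uniformly as $t\to0^+$; its infinitesimal generator is $G(z)=\lim_{t\to0^+}(\varphi_t(z)-z)/t$. $M_p(r,f)=\left(\int_0^{2\pi}|f(re^{i\theta})|^p\frac{d\theta}{2\pi}\right)^{1/p}$; $H(p,\infty,\alpha)$ is the space of analytic $f$ on $\mathbb{D}$ with $\sup_{0\le r<1}(1-r)^\alpha M_p(r,f)<\infty$. *)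

theory Defs
  imports "HOL-Complex_Analysis.Complex_Analysis"
begin

abbreviation unit_disc :: "complex set" where "unit_disc \<equiv> ball 0 1"

definition analytic_semigroup :: "(real \<Rightarrow> complex \<Rightarrow> complex) \<Rightarrow> bool" where
  "analytic_semigroup \<phi> \<longleftrightarrow>
     (\<forall>t\<ge>0. \<phi> t holomorphic_on unit_disc \<and> \<phi> t ` unit_disc \<subseteq> unit_disc) \<and>
     (\<forall>z\<in>unit_disc. \<phi> 0 z = z) \<and>
     (\<forall>t\<ge>0. \<forall>s\<ge>0. \<forall>z\<in>unit_disc. \<phi> (t + s) z = \<phi> t (\<phi> s z)) \<and>
     (\<forall>C. compact C \<and> C \<subseteq> unit_disc \<longrightarrow> uniform_limit C \<phi> (\<phi> 0) (at_right 0))"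

definition infinitesimal_generator :: "(real \<Rightarrow> complex \<Rightarrow> complex) \<Rightarrow> (complex \<Rightarrow> complex) \<Rightarrow> bool" where
  "infinitesimal_generator \<phi> G \<longleftrightarrow>
     (\<forall>z\<in>unit_disc. ((\<lambda>t. (\<phi> t z - z) / complex_of_real t) \<longlongrightarrow> G z) (at_right 0))"

definition denjoy_wolff_point :: "(real \<Rightarrow> complex \<Rightarrow> complex) \<Rightarrow> complex \<Rightarrow> bool" where
  "denjoy_wolff_point \<phi> \<tau> \<longleftrightarrow> \<tau> \<in> cball 0 1 \<and>
     (\<forall>z\<in>unit_disc. ((\<lambda>t. \<phi> t z) \<longlongrightarrow> \<tau>) at_top)"

definition Mp :: "real \<Rightarrow> real \<Rightarrow> (complex \<Rightarrow> complex) \<Rightarrow> real" where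
  "Mp p r f = (integral {0..2*pi} (\<lambda>\<theta>. norm (f (complex_of_real r * cis \<theta>)) powr p) / (2*pi)) powr (1/p)"

definition H_p_inf :: "real \<Rightarrow> real \<Rightarrow> (complex \<Rightarrow> complex) set" where
  "H_p_inf p \<alpha> = {f. f holomorphic_on unit_disc \<and>
      (\<exists>C. \<forall>r. 0 \<le> r \<and> r < 1 \<longrightarrow> (1 - r) powr \<alpha> * Mp p r f \<le> C)}"

definition delta_seq :: "real \<Rightarrow> nat \<Rightarrow> real" where
  "delta_seq K n = K powr (- real n)"

definition f_seq :: "real \<Rightarrow> real \<Rightarrow> real \<Rightarrow> nat \<Rightarrow> complex \<Rightarrow> complex" where
  "f_seq K \<nu> \<beta> n z = complex_of_real (delta_seq K n powr \<nu>)
      * (complex_of_real (1 + delta_seq K n) - z) powr complex_of_real \<beta>"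

definition X_space :: "real \<Rightarrow> real \<Rightarrow> real \<Rightarrow> (complex \<Rightarrow> complex) set" where
  "X_space K \<nu> \<beta> = {h. \<exists>a :: nat \<Rightarrow> complex. bounded (range a) \<and>
      (\<forall>z\<in>unit_disc. (\<lambda>n. a (Suc n) * f_seq K \<nu> \<beta> (Suc n) z) sums h z)}"

definition E_space :: "real \<Rightarrow> real \<Rightarrow> (complex \<Rightarrow> complex) \<Rightarrow> (complex \<Rightarrow> complex) set" where
  "E_space p \<alpha> P = {h. h \<in> H_p_inf p \<alpha> \<and>
      (\<lambda>z. (1 - z)^2 * P z * deriv h z) \<in> H_p_inf p \<alpha>}"

end

theory Submission
  imports Defs
begin


lemma sum_inj_geom:
  fixes q :: real and f :: "'a \<Rightarrow> nat"
  assumes "0 \<le> q" "q < 1" "finite A" "inj_on f A"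
  shows "(\<Sum>n\<in>A. q ^ f n) \<le> 1 / (1 - q)"
proof -
  have "(\<Sum>n\<in>A. q ^ f n) = (\<Sum>k\<in>f ` A. q ^ k)"
    using assms(4) by (simp add: sum.reindex)
  also have "\<dots> \<le> (\<Sum>k. q ^ k)"
    by (rule sum_le_suminf) (use assms in \<open>auto intro: summable_geometric\<close>)
  also have "\<dots> = 1 / (1 - q)" using assms by (simp add: suminf_geometric)
  finally show ?thesis .
qed

lemma sum_two_sided_geom:
  fixes q :: real and j :: int
  assumes "0 \<le> q" "q < 1"
  shows "(\<Sum>n<N. q ^ nat \<bar>int n - j\<bar>) \<le> 2 / (1 - q)"
proof -
  let ?A = "{n. n < N \<and> int n \<ge> j}" and ?B = "{n. n < N \<and> \<not> int n \<ge> j}"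
  have fin: "finite ?A" "finite ?B" by auto
  have "{..<N} = ?A \<union> ?B" by auto
  then have "(\<Sum>n<N. q ^ nat \<bar>int n - j\<bar>) = (\<Sum>n\<in>?A \<union> ?B. q ^ nat \<bar>int n - j\<bar>)"
    by simp
  also have "\<dots> = (\<Sum>n\<in>?A. q ^ nat \<bar>int n - j\<bar>) + (\<Sum>n\<in>?B. q ^ nat \<bar>int n - j\<bar>)"
    by (rule sum.union_disjoint) auto
  also have "\<dots> \<le> 1/(1-q) + 1/(1-q)"
  proof (rule add_mono)
    show "(\<Sum>n\<in>?A. q ^ nat \<bar>int n - j\<bar>) \<le> 1/(1-q)"
      by (rule sum_inj_geom) (use assms in \<open>auto simp: inj_on_def\<close>)
    show "(\<Sum>n\<in>?B. q ^ nat \<bar>int n - j\<bar>) \<le> 1/(1-q)"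
      by (rule sum_inj_geom) (use assms in \<open>auto simp: inj_on_def\<close>)
  qed
  finally show ?thesis by simp
qed



lemma phi_bound:
  fixes x \<nu> e :: real
  assumes "x > 0" "\<nu> > 0" "e > 0"
  shows "x powr \<nu> * (1 + x) powr (-e-\<nu>) \<le> x powr \<nu>"
    and "x powr \<nu> * (1 + x) powr (-e-\<nu>) \<le> x powr (-e)"
proof -
  have "(1 + x) powr (-e-\<nu>) \<le> (1 + x) powr 0"
    using assms by (intro powr_mono) auto
  then have "(1 + x) powr (-e-\<nu>) \<le> 1" using assms by simp
  then show "x powr \<nu> * (1 + x) powr (-e-\<nu>) \<le> x powr \<nu>"
    using assms by (simp add: mult_left_le)
  have "(1 + x) powr (-e-\<nu>) \<le> x powr (-e-\<nu>)"
    using assms by (intro powr_mono2') auto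
  then have "x powr \<nu> * (1 + x) powr (-e-\<nu>) \<le> x powr \<nu> * x powr (-e-\<nu>)"
    by (intro mult_left_mono) auto
  also have "\<dots> = x powr (-e)" by (simp add: powr_add[symmetric])
  finally show "x powr \<nu> * (1 + x) powr (-e-\<nu>) \<le> x powr (-e)" .
qed

lemma phi_bound_K:
  fixes K u \<nu> e :: real
  assumes "K > 1" "\<nu> > 0" "e > 0"
  shows "(K powr u) powr \<nu> * (1 + K powr u) powr (-e-\<nu>) \<le> K powr (- min \<nu> e * \<bar>u\<bar>)"
proof (cases "u \<le> 0")
  case True
  have "(K powr u) powr \<nu> * (1 + K powr u) powr (-e-\<nu>) \<le> (K powr u) powr \<nu>"
    using phi_bound(1)[of "K powr u" \<nu> e] assms by auto
  also have "\<dots> = K powr (- \<nu> * \<bar>u\<bar>)" using True by (simp add: powr_powr mult.commute)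
  also have "\<dots> \<le> K powr (- min \<nu> e * \<bar>u\<bar>)"
    using assms by (intro powr_mono) (auto intro: mult_right_mono)
  finally show ?thesis .
next
  case False
  have "(K powr u) powr \<nu> * (1 + K powr u) powr (-e-\<nu>) \<le> (K powr u) powr (-e)"
    using phi_bound(2)[of "K powr u" \<nu> e] assms by auto
  also have "\<dots> = K powr (- e * \<bar>u\<bar>)" using False by (simp add: powr_powr mult.commute)
  also have "\<dots> \<le> K powr (- min \<nu> e * \<bar>u\<bar>)"
    using assms by (intro powr_mono) (auto intro: mult_right_mono)
  finally show ?thesis .
qed

lemma grid_sum:
  fixes K \<nu> e d :: real
  assumes K: "K > 1" and nu: "\<nu> > 0" and e: "e > 0" and d: "d > 0"
  defines "q \<equiv> K powr (- min \<nu> e)"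
  shows "(\<Sum>n<N. (K powr (- real (Suc n))) powr \<nu> * (K powr (- real (Suc n)) + d) powr (-e-\<nu>))
          \<le> 2 / (q * (1 - q)) * d powr (-e)"
proof -
  define L where "L = log K d"
  define j where "j = - \<lfloor>L\<rfloor>"
  have dL: "d = K powr L" using K d by (simp add: L_def)
  have q0: "0 < q" using K by (auto simp: q_def)
  have "K powr (- min \<nu> e) < K powr 0" using K nu e by (intro powr_less_mono) auto
  then have q1: "q < 1" using K by (simp add: q_def)
  have termb: "(K powr (- real (Suc n))) powr \<nu> * (K powr (- real (Suc n)) + d) powr (-e-\<nu>)
        \<le> d powr (-e) * (q ^ nat \<bar>int n - (j - 1)\<bar> / q)" for n
  proof -
    define u where "u = - real (Suc n) - L"
    define x where "x = K powr u"
    have x0: "x > 0" using K by (simp add: x_def)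
    have \<delta>: "K powr (- real (Suc n)) = x * d" using K by (simp add: x_def u_def dL powr_add[symmetric])
    have "(K powr (- real (Suc n))) powr \<nu> * (K powr (- real (Suc n)) + d) powr (-e-\<nu>)
        = (x * d) powr \<nu> * (d * (1 + x)) powr (-e-\<nu>)"
      by (simp only: \<delta>) (simp add: algebra_simps)
    also have "\<dots> = (d powr \<nu> * d powr (-e-\<nu>)) * (x powr \<nu> * (1 + x) powr (-e-\<nu>))"
      using x0 d by (simp add: powr_mult mult_ac)
    also have "\<dots> = d powr (-e) * (x powr \<nu> * (1 + x) powr (-e-\<nu>))"
      by (simp add: powr_add[symmetric])
    also have "\<dots> \<le> d powr (-e) * K powr (- min \<nu> e * \<bar>u\<bar>)"
      using phi_bound_K[OF K nu e, of u] by (intro mult_left_mono) (auto simp: x_def)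
    also have "K powr (- min \<nu> e * \<bar>u\<bar>) \<le> K powr (- min \<nu> e * (real_of_int \<bar>int n - (j - 1)\<bar> - 1))"
    proof -
      have "\<bar>u\<bar> \<ge> real_of_int \<bar>int n - (j - 1)\<bar> - 1"
        unfolding u_def j_def using floor_correct[of L] by linarith
      then show ?thesis using K nu e by (intro powr_mono) (auto intro: mult_left_mono)
    qed
    also have "K powr (- min \<nu> e * (real_of_int \<bar>int n - (j - 1)\<bar> - 1)) = q ^ nat \<bar>int n - (j - 1)\<bar> / q"
    proof -
      have "q ^ nat \<bar>int n - (j - 1)\<bar> = K powr (- min \<nu> e * real (nat \<bar>int n - (j - 1)\<bar>))"
        using K by (simp add: q_def powr_realpow[symmetric] powr_powr mult.commute)
      then show ?thesis using K by (simp add: q_def powr_diff[symmetric] algebra_simps powr_minus_divide)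
    qed
    finally show ?thesis using d by (simp add: mult_left_mono)
  qed
  have "(\<Sum>n<N. (K powr (- real (Suc n))) powr \<nu> * (K powr (- real (Suc n)) + d) powr (-e-\<nu>))
      \<le> (\<Sum>n<N. d powr (-e) * (q ^ nat \<bar>int n - (j - 1)\<bar> / q))"
    by (rule sum_mono) (rule termb)
  also have "\<dots> = d powr (-e) / q * (\<Sum>n<N. q ^ nat \<bar>int n - (j - 1)\<bar>)"
    by (simp add: sum_distrib_left sum_divide_distrib)
  also have "\<dots> \<le> d powr (-e) / q * (2 / (1 - q))"
    using q0 q1 by (intro mult_left_mono sum_two_sided_geom) auto
  also have "\<dots> = 2 / (q * (1 - q)) * d powr (-e)" by simp
  finally show ?thesis .
qed



lemma norm_shift_lower:
  fixes \<delta> :: real and z :: complex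
  assumes "\<delta> \<ge> 0" "norm z < 1"
  shows "norm (complex_of_real (1 + \<delta>) - z) \<ge> (\<delta> + norm (1 - z)) / 2"
proof -
  define a where "a = Re (1 - z)"
  define b where "b = Im (1 - z)"
  have a0: "a > 0" using assms abs_Re_le_cmod[of z] by (auto simp: a_def)
  have n1: "norm (1 - z) \<le> a + \<bar>b\<bar>" using cmod_le[of "1 - z"] a0 unfolding a_def b_def by simp
  have eq: "complex_of_real (1 + \<delta>) - z = Complex (\<delta> + a) b"
    by (simp add: a_def b_def complex_eq_iff)
  have "((\<delta> + a) + \<bar>b\<bar>) / 2 \<le> sqrt ((\<delta> + a)^2 + b^2)"
  proof (rule real_le_rsqrt)
    define x where "x = \<delta> + a"
    define y where "y = \<bar>b\<bar>"
    have h1: "(x + y)^2 = x^2 + 2*x*y + y^2" by (simp add: power2_sum)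
    have h2: "(x - y)^2 = x^2 - 2*x*y + y^2" by (simp add: power2_diff)
    have h3: "0 \<le> (x - y)^2" by simp
    have h4: "((x + y) / 2)^2 = (x + y)^2 / 4" by (simp add: power_divide)
    have "((x + y) / 2)^2 \<le> x^2 + y^2" using h1 h2 h3 h4 zero_le_power2[of x] zero_le_power2[of y] by linarith
    then show "(((\<delta> + a) + \<bar>b\<bar>) / 2)^2 \<le> (\<delta> + a)^2 + b^2"
      by (simp add: x_def y_def)
  qed
  moreover have "norm (complex_of_real (1 + \<delta>) - z) = sqrt ((\<delta> + a)^2 + b^2)"
    unfolding eq by (simp add: complex_norm)
  moreover have "(\<delta> + norm (1 - z)) / 2 \<le> ((\<delta> + a) + \<bar>b\<bar>) / 2"
    using n1 by (intro divide_right_mono) auto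
  ultimately show ?thesis by (metis order_trans)
qed

lemma sum_f_bound:
  fixes K \<nu> e :: real and z :: complex
  assumes K: "K > 1" and nu: "\<nu> > 0" and e: "e > 0" and z: "norm z < 1"
  defines "q \<equiv> K powr (- min \<nu> e)"
  shows "(\<Sum>n<N. (K powr (- real (Suc n))) powr \<nu> *
            norm (complex_of_real (1 + K powr (- real (Suc n))) - z) powr (-e-\<nu>))
          \<le> 2 powr (e+\<nu>) * (2 / (q * (1 - q))) * norm (1 - z) powr (-e)"
proof -
  have d: "norm (1 - z) > 0" using z by auto
  have "(\<Sum>n<N. (K powr (- real (Suc n))) powr \<nu> *
            norm (complex_of_real (1 + K powr (- real (Suc n))) - z) powr (-e-\<nu>))
      \<le> (\<Sum>n<N. 2 powr (e+\<nu>) * ((K powr (- real (Suc n))) powr \<nu> *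
            (K powr (- real (Suc n)) + norm (1 - z)) powr (-e-\<nu>)))"
  proof (rule sum_mono)
    fix n
    define \<delta> where "\<delta> = K powr (- real (Suc n))"
    have \<delta>0: "\<delta> > 0" using K by (simp add: \<delta>_def)
    have "norm (complex_of_real (1 + \<delta>) - z) powr (-e-\<nu>) \<le> ((\<delta> + norm (1 - z)) / 2) powr (-e-\<nu>)"
      using norm_shift_lower[of \<delta> z] \<delta>0 z d e nu by (intro powr_mono2') (auto simp: add_pos_pos)
    also have "\<dots> = 2 powr (e+\<nu>) * (\<delta> + norm (1 - z)) powr (-e-\<nu>)"
    proof -
      have two: "2 powr (e+\<nu>) * 2 powr (-e-\<nu>) = 1" by (simp add: powr_add[symmetric])
      show ?thesis using \<delta>0 d two by (simp add: powr_divide divide_simps mult_ac)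
    qed
    finally have "\<delta> powr \<nu> * norm (complex_of_real (1 + \<delta>) - z) powr (-e-\<nu>)
        \<le> 2 powr (e+\<nu>) * (\<delta> powr \<nu> * (\<delta> + norm (1 - z)) powr (-e-\<nu>))"
      by (simp add: mult_left_mono mult.left_commute)
    then show "(K powr (- real (Suc n))) powr \<nu> *
            norm (complex_of_real (1 + K powr (- real (Suc n))) - z) powr (-e-\<nu>)
      \<le> 2 powr (e+\<nu>) * ((K powr (- real (Suc n))) powr \<nu> *
            (K powr (- real (Suc n)) + norm (1 - z)) powr (-e-\<nu>))"
      by (simp add: \<delta>_def)
  qed
  also have "\<dots> = 2 powr (e+\<nu>) * (\<Sum>n<N. (K powr (- real (Suc n))) powr \<nu> *
            (K powr (- real (Suc n)) + norm (1 - z)) powr (-e-\<nu>))"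
    by (simp add: sum_distrib_left)
  also have "\<dots> \<le> 2 powr (e+\<nu>) * (2 / (q * (1 - q)) * norm (1 - z) powr (-e))"
    unfolding q_def by (intro mult_left_mono grid_sum K nu e d) auto
  finally show ?thesis by (simp add: mult.assoc)
qed



lemma sin_lower_third:
  fixes t :: real assumes "0 \<le> t" "t \<le> 2"
  shows "sin t \<ge> t / 3"
proof -
  have se: "(\<Sum>m<3. sin_coeff m * t ^ m) = t"
    by (simp add: eval_nat_numeral sin_coeff_def)
  have f3: "(fact 3 :: real) = 6" by (simp add: eval_nat_numeral)
  have m: "\<bar>sin t - t\<bar> \<le> inverse (fact 3) * \<bar>t\<bar> ^ 3"
    using Maclaurin_sin_bound[of t 3] se by simp
  have e: "inverse (fact 3) * \<bar>t\<bar> ^ 3 = inverse 6 * t^3"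
    by (simp only: f3 abs_of_nonneg[OF assms(1)])
  have t2: "t^2 \<le> 2^2" using assms by (intro power_mono) auto
  then have "t * t^2 \<le> t * 4" using assms by (intro mult_left_mono) auto
  then have t3: "t^3 \<le> 4 * t" by (simp add: power3_eq_cube power2_eq_square mult.commute)
  define y where "y = inverse 6 * t^3"
  have "y \<le> inverse 6 * (4 * t)" unfolding y_def using t3 by (intro mult_left_mono) auto
  moreover have "inverse 6 * (4 * t) = (2/3) * t" by simp
  moreover have "\<bar>sin t - t\<bar> \<le> y" using m unfolding e y_def .
  then have "- (sin t - t) \<le> y" by (rule abs_le_D2)
  ultimately have "3 * sin t \<ge> t" by linarith
  then show ?thesis by simp
qed

lemma norm_1_cis_lower:
  fixes \<theta> :: real assumes "0 \<le> \<theta>" "\<theta> \<le> 2*pi"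
  shows "norm (1 - cis \<theta>) \<ge> min \<theta> (2*pi - \<theta>) / 3"
proof -
  define t where "t = \<theta>/2"
  have th: "\<theta> = 2*t" by (simp add: t_def)
  have nrm: "norm (1 - cis \<theta>) = 2 * \<bar>sin t\<bar>"
  proof -
    have "(norm (1 - cis \<theta>))^2 = (1 - cos \<theta>)^2 + (sin \<theta>)^2"
      by (simp add: cmod_def cis.code)
    also have "\<dots> = (2 * sin t ^ 2)^2 + (2 * sin t * cos t)^2"
    proof -
      have c2: "cos t ^ 2 = 1 - sin t ^ 2" by (rule cos_squared_eq)
      have "1 - cos \<theta> = 2 * sin t ^ 2" unfolding th cos_double c2 by simp
      moreover have "sin \<theta> = 2 * sin t * cos t" unfolding th by (rule sin_double)
      ultimately show ?thesis by simp
    qed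
    also have "\<dots> = 4 * sin t ^ 2 * (sin t ^ 2 + cos t ^ 2)"
      by algebra
    also have "\<dots> = 4 * sin t ^ 2"
      by (simp only: sin_cos_squared_add mult_1_right)
    also have "\<dots> = (2 * \<bar>sin t\<bar>)^2"
      by (simp add: power_mult_distrib)
    finally have "(norm (1 - cis \<theta>))^2 = (2 * \<bar>sin t\<bar>)^2" .
    then show ?thesis by (rule power2_eq_imp_eq) auto
  qed
  have pi4: "pi < 4" by (rule pi_less_4)
  show ?thesis
  proof (cases "t \<le> pi/2")
    case True
    have st: "sin t \<ge> t / 3" using True pi4 assms by (intro sin_lower_third) (auto simp: t_def)
    have t0: "t \<ge> 0" using assms by (simp add: t_def)
    have "norm (1 - cis \<theta>) = 2 * \<bar>sin t\<bar>" by (rule nrm)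
    also have "2 * \<bar>sin t\<bar> \<ge> 2 * (t / 3)" using st t0 by (simp add: abs_if)
    also have "2 * (t / 3) = \<theta> / 3" by (simp add: t_def)
    finally have "norm (1 - cis \<theta>) \<ge> \<theta> / 3" .
    moreover have "min \<theta> (2*pi - \<theta>) / 3 \<le> \<theta> / 3" by (intro divide_right_mono) auto
    ultimately show ?thesis by (rule order_trans[rotated])
  next
    case False
    have st: "sin t \<ge> (pi - t) / 3"
      using sin_lower_third[of "pi - t"] False pi4 assms by (simp add: t_def)
    have t0: "pi - t \<ge> 0" using assms by (simp add: t_def)
    have "norm (1 - cis \<theta>) = 2 * \<bar>sin t\<bar>" by (rule nrm)
    also have "2 * \<bar>sin t\<bar> \<ge> 2 * ((pi - t) / 3)" using st t0 by (simp add: abs_if)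
    also have "2 * ((pi - t) / 3) = (2*pi - \<theta>) / 3" by (simp add: t_def)
    finally have "norm (1 - cis \<theta>) \<ge> (2*pi - \<theta>) / 3" .
    moreover have "min \<theta> (2*pi - \<theta>) / 3 \<le> (2*pi - \<theta>) / 3" by (intro divide_right_mono) auto
    ultimately show ?thesis by (rule order_trans[rotated])
  qed
qed

lemma lin_aux: "(x::real) \<le> s + a \<Longrightarrow> m \<le> x \<Longrightarrow> a \<le> s \<Longrightarrow> (a + m) / 3 \<le> s"
proof -
  assume "(x::real) \<le> s + a" "m \<le> x" "a \<le> s"
  then have "a + m \<le> 3 * s" by linarith
  then show ?thesis by simp
qed

lemma norm_1_rcis_lower:
  fixes \<theta> r :: real assumes "0 \<le> \<theta>" "\<theta> \<le> 2*pi" "0 \<le> r" "r < 1"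
  shows "norm (1 - complex_of_real r * cis \<theta>) \<ge> ((1 - r) + min \<theta> (2*pi - \<theta>) / 3) / 3"
proof -
  have n: "norm (complex_of_real r * cis \<theta>) = r" using assms by (simp add: norm_mult)
  have s1: "norm (1 - complex_of_real r * cis \<theta>) \<ge> 1 - r"
    using norm_triangle_ineq2[of 1 "complex_of_real r * cis \<theta>"] n by simp
  have "norm (1 - cis \<theta>) \<le> norm (1 - complex_of_real r * cis \<theta>) + norm (complex_of_real r * cis \<theta> - cis \<theta>)"
    using norm_triangle_ineq[of "1 - complex_of_real r * cis \<theta>" "complex_of_real r * cis \<theta> - cis \<theta>"] by simp
  moreover have "norm (complex_of_real r * cis \<theta> - cis \<theta>) = 1 - r"
  proof -
    have "complex_of_real r * cis \<theta> - cis \<theta> = complex_of_real (r - 1) * cis \<theta>" by (simp add: algebra_simps)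
    moreover have "norm (complex_of_real (r - 1)) = 1 - r" using assms by (simp only: norm_of_real abs_if) simp
    ultimately show ?thesis by (metis norm_mult norm_cis mult_1_right)
  qed
  ultimately have "norm (1 - cis \<theta>) \<le> norm (1 - complex_of_real r * cis \<theta>) + (1 - r)" by simp
  moreover have l: "norm (1 - cis \<theta>) \<ge> min \<theta> (2*pi - \<theta>) / 3" by (rule norm_1_cis_lower[OF assms(1,2)])
  ultimately show ?thesis using s1 by (rule lin_aux)
qed



lemma int_h1:
  fixes a Q :: real assumes a: "a > 0" and Q: "Q > 1"
  shows "((\<lambda>\<theta>. (a + \<theta>/3) powr (-Q)) has_integral
          (3/(1-Q) * (a + (2*pi)/3) powr (1-Q) - 3/(1-Q) * (a + 0/3) powr (1-Q))) {0..2*pi}"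
proof (rule fundamental_theorem_of_calculus[where f = "\<lambda>\<theta>. 3/(1-Q) * (a + \<theta>/3) powr (1-Q)"])
  show "0 \<le> 2*pi" by simp
  fix x :: real assume x: "x \<in> {0..2*pi}"
  have pos: "a + x/3 > 0" using a x by auto
  have d1: "((\<lambda>x. a + x/3) has_real_derivative 1/3) (at x)"
    by (auto intro!: derivative_eq_intros)
  have "((\<lambda>x. (a + x/3) powr (1-Q)) has_real_derivative (1-Q) * (a + x/3) powr (1-Q - of_nat 1) * (1/3)) (at x)"
    by (rule DERIV_fun_powr[OF d1 pos])
  then have "((\<lambda>x. 3/(1-Q) * (a + x/3) powr (1-Q)) has_real_derivative 3/(1-Q) * ((1-Q) * (a + x/3) powr (1-Q - of_nat 1) * (1/3))) (at x)"
    by (rule DERIV_cmult)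
  moreover have "3/(1-Q) * ((1-Q) * (a + x/3) powr (1-Q - of_nat 1) * (1/3)) = (a + x/3) powr (-Q)"
    using Q by simp
  ultimately show "((\<lambda>\<theta>. 3/(1-Q) * (a + \<theta>/3) powr (1-Q)) has_vector_derivative (a + x/3) powr (-Q)) (at x within {0..2*pi})"
    by (auto simp: has_real_derivative_iff_has_vector_derivative[symmetric] intro: has_field_derivative_at_within)
qed

lemma int_h2:
  fixes a Q :: real assumes a: "a > 0" and Q: "Q > 1"
  shows "((\<lambda>\<theta>. (a + (2*pi - \<theta>)/3) powr (-Q)) has_integral
          (-3/(1-Q) * (a + (2*pi - 2*pi)/3) powr (1-Q) - (-3/(1-Q) * (a + (2*pi - 0)/3) powr (1-Q)))) {0..2*pi}"
proof (rule fundamental_theorem_of_calculus[where f = "\<lambda>\<theta>. -3/(1-Q) * (a + (2*pi - \<theta>)/3) powr (1-Q)"])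
  show "0 \<le> 2*pi" by simp
  fix x :: real assume x: "x \<in> {0..2*pi}"
  have "(2*pi - x)/3 \<ge> 0" using x by auto
  then have pos: "a + (2*pi - x)/3 > 0" using a by linarith
  have d1: "((\<lambda>x. a + (2*pi - x)/3) has_real_derivative -1/3) (at x)"
    by (auto intro!: derivative_eq_intros)
  have "((\<lambda>x. (a + (2*pi - x)/3) powr (1-Q)) has_real_derivative (1-Q) * (a + (2*pi - x)/3) powr (1-Q - of_nat 1) * (-1/3)) (at x)"
    by (rule DERIV_fun_powr[OF d1 pos])
  then have "((\<lambda>x. -3/(1-Q) * (a + (2*pi - x)/3) powr (1-Q)) has_real_derivative -3/(1-Q) * ((1-Q) * (a + (2*pi - x)/3) powr (1-Q - of_nat 1) * (-1/3))) (at x)"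
    by (rule DERIV_cmult)
  moreover have "-3/(1-Q) * ((1-Q) * (a + (2*pi - x)/3) powr (1-Q - of_nat 1) * (-1/3)) = (a + (2*pi - x)/3) powr (-Q)"
    using Q by simp
  ultimately show "((\<lambda>\<theta>. -3/(1-Q) * (a + (2*pi - \<theta>)/3) powr (1-Q)) has_vector_derivative (a + (2*pi - x)/3) powr (-Q)) (at x within {0..2*pi})"
    by (auto simp: has_real_derivative_iff_has_vector_derivative[symmetric] intro: has_field_derivative_at_within)
qed

lemma int_h12:
  fixes a Q :: real assumes a: "a > 0" and Q: "Q > 1"
  obtains I where "((\<lambda>\<theta>. (a + \<theta>/3) powr (-Q) + (a + (2*pi - \<theta>)/3) powr (-Q)) has_integral I) {0..2*pi}"
    and "I \<le> 6/(Q-1) * a powr (1-Q)"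
proof -
  define I1 where "I1 = 3/(1-Q) * (a + (2*pi)/3) powr (1-Q) - 3/(1-Q) * (a + 0/3) powr (1-Q)"
  define I2 where "I2 = -3/(1-Q) * (a + (2*pi - 2*pi)/3) powr (1-Q) - (-3/(1-Q) * (a + (2*pi - 0)/3) powr (1-Q))"
  have "((\<lambda>\<theta>. (a + \<theta>/3) powr (-Q) + (a + (2*pi - \<theta>)/3) powr (-Q)) has_integral (I1 + I2)) {0..2*pi}"
    unfolding I1_def I2_def by (intro has_integral_add int_h1 int_h2 a Q)
  moreover have "I1 + I2 \<le> 6/(Q-1) * a powr (1-Q)"
  proof -
    have e: "I1 + I2 = 6/(Q-1) * a powr (1-Q) - 6/(Q-1) * (a + 2*pi/3) powr (1-Q)"
      using Q unfolding I1_def I2_def by (simp add: field_simps)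
    have "0 \<le> 6/(Q-1) * (a + 2*pi/3) powr (1-Q)" using Q by simp
    then show ?thesis unfolding e by linarith
  qed
  ultimately show ?thesis using that by blast
qed



lemma Mp_bound:
  fixes p c r A :: real and F :: "complex \<Rightarrow> complex"
  assumes p: "p > 0" and cp: "c * p > 1" and r0: "0 \<le> r" and r1: "r < 1" and A: "A \<ge> 0"
    and bnd: "\<And>\<theta>. norm (F (complex_of_real r * cis \<theta>)) \<le> A * norm (1 - complex_of_real r * cis \<theta>) powr (-c)"
  shows "Mp p r F \<le> A * (3 powr (c*p) * (6/(c*p-1)) / (2*pi)) powr (1/p) * (1 - r) powr (1/p - c)"
proof -
  define Q where "Q = c * p"
  define a where "a = 1 - r"
  have Q: "Q > 1" using cp by (simp add: Q_def)
  have a: "a > 0" using r1 by (simp add: a_def)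
  define f where "f = (\<lambda>\<theta>. norm (F (complex_of_real r * cis \<theta>)) powr p)"
  define g where "g = (\<lambda>\<theta>. A powr p * 3 powr Q * ((a + \<theta>/3) powr (-Q) + (a + (2*pi - \<theta>)/3) powr (-Q)))"
  obtain I where I: "((\<lambda>\<theta>. (a + \<theta>/3) powr (-Q) + (a + (2*pi - \<theta>)/3) powr (-Q)) has_integral I) {0..2*pi}"
    and Ile: "I \<le> 6/(Q-1) * a powr (1-Q)"
    using int_h12[OF a Q] by blast
  have gI: "(g has_integral (A powr p * 3 powr Q * I)) {0..2*pi}"
    unfolding g_def by (rule has_integral_mult_right[OF I])
  have fg: "f \<theta> \<le> g \<theta>" if th: "\<theta> \<in> {0..2*pi}" for \<theta>
  proof -
    define s where "s = norm (1 - complex_of_real r * cis \<theta>)"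
    define m where "m = min \<theta> (2*pi - \<theta>)"
    have m0: "m \<ge> 0" using th by (auto simp: m_def)
    have slow: "s \<ge> (a + m/3)/3" unfolding s_def a_def m_def
      using norm_1_rcis_lower[of \<theta> r] th r0 r1 by auto
    have lpos: "(a + m/3)/3 > 0" using a m0 by auto
    have "f \<theta> \<le> (A * s powr (-c)) powr p"
      unfolding f_def s_def using p bnd[of \<theta>] by (intro powr_mono2) auto
    also have "\<dots> = A powr p * s powr (-Q)"
      using A by (simp add: powr_mult powr_powr Q_def)
    also have "s powr (-Q) \<le> ((a + m/3)/3) powr (-Q)"
      using slow lpos Q by (intro powr_mono2') auto
    also have "((a + m/3)/3) powr (-Q) = 3 powr Q * (a + m/3) powr (-Q)"
    proof -
      have "((a + m/3)/3) powr (-Q) = (a + m/3) powr (-Q) / 3 powr (-Q)"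
        using lpos by (simp add: powr_divide)
      moreover have "3 powr (-Q) = inverse (3 powr Q)" by (simp add: powr_minus)
      moreover have "\<And>x y::real. x / inverse y = y * x" by (simp add: divide_inverse mult.commute)
      ultimately show ?thesis by metis
    qed
    also have "(a + m/3) powr (-Q) \<le> (a + \<theta>/3) powr (-Q) + (a + (2*pi - \<theta>)/3) powr (-Q)"
      by (cases "\<theta> \<le> 2*pi - \<theta>") (auto simp: m_def min_def)
    finally show ?thesis
      using A by (simp add: g_def mult_left_mono mult.assoc)
  qed
  have Y0: "0 \<le> A powr p * (3 powr Q * (6/(Q-1))) * a powr (1-Q)" using Q by simp
  have intle: "integral {0..2*pi} f \<le> A powr p * (3 powr Q * (6/(Q-1))) * a powr (1-Q)"
  proof (cases "f integrable_on {0..2*pi}")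
    case True
    have "integral {0..2*pi} f \<le> integral {0..2*pi} g"
      by (rule integral_le[OF True]) (use gI fg in auto)
    also have "\<dots> = A powr p * 3 powr Q * I" using gI by (rule integral_unique)
    also have "\<dots> \<le> A powr p * 3 powr Q * (6/(Q-1) * a powr (1-Q))"
      using Ile by (intro mult_left_mono) auto
    finally show ?thesis by (simp add: mult.assoc)
  next
    case False
    then show ?thesis using Y0 by (simp add: not_integrable_integral)
  qed
  have int0: "integral {0..2*pi} f \<ge> 0"
  proof (cases "f integrable_on {0..2*pi}")
    case True then show ?thesis by (rule integral_nonneg) (auto simp: f_def)
  next
    case False then show ?thesis by (simp add: not_integrable_integral)
  qed
  have "Mp p r F = (integral {0..2*pi} f / (2*pi)) powr (1/p)"
    by (simp add: Mp_def f_def)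
  also have "\<dots> \<le> (A powr p * (3 powr Q * (6/(Q-1))) * a powr (1-Q) / (2*pi)) powr (1/p)"
    using intle int0 p by (intro powr_mono2 divide_right_mono) auto
  also have "\<dots> = (A powr p) powr (1/p) * (3 powr Q * (6/(Q-1)) / (2*pi)) powr (1/p) * (a powr (1-Q)) powr (1/p)"
    using Q A by (simp add: powr_mult powr_divide)
  also have "\<dots> = A * (3 powr Q * (6/(Q-1)) / (2*pi)) powr (1/p) * a powr (1/p - c)"
  proof -
    have "(A powr p) powr (1/p) = A" using A p by (simp add: powr_powr)
    moreover have "(a powr (1-Q)) powr (1/p) = a powr (1/p - c)"
      using p by (simp add: powr_powr Q_def field_simps)
    ultimately show ?thesis by simp
  qed
  finally show ?thesis by (simp add: Q_def a_def)
qed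



lemma norm_lt_aux:
  fixes Q b :: complex
  assumes "Re Q > 0" "Re b > 0"
  shows "norm (Q - b) < norm (Q + cnj b)"
proof -
  have "(Re Q - Re b)^2 + (Im Q - Im b)^2 < (Re Q + Re b)^2 + (Im Q - Im b)^2"
  proof -
    have "(Re Q + Re b)^2 - (Re Q - Re b)^2 = 4 * Re Q * Re b" by (simp add: power2_eq_square algebra_simps)
    moreover have "4 * Re Q * Re b > 0" using assms by simp
    ultimately show ?thesis by linarith
  qed
  then have "sqrt ((Re Q - Re b)^2 + (Im Q - Im b)^2) < sqrt ((Re Q + Re b)^2 + (Im Q - Im b)^2)"
    by (rule real_sqrt_less_mono)
  then show ?thesis by (simp add: cmod_def)
qed

lemma P_bound:
  fixes P :: "complex \<Rightarrow> complex"
  assumes holP: "P holomorphic_on ball 0 1" and reP: "\<forall>z\<in>ball 0 1. Re (P z) \<ge> 0"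
  obtains C where "C \<ge> 0" "\<And>z. norm z < 1 \<Longrightarrow> norm (P z) \<le> C / (1 - norm z)"
proof -
  define b where "b = P 0 + 1"
  have reb: "Re b \<ge> 1" using reP by (simp add: b_def)
  define w where "w = (\<lambda>z. (P z + 1 - b) / (P z + 1 + cnj b))"
  have den: "P z + 1 + cnj b \<noteq> 0" if "norm z < 1" for z
  proof -
    have "Re (P z) \<ge> 0" using reP that by auto
    then have "Re (P z + 1 + cnj b) > 0" using reb by simp
    then show ?thesis by (metis less_irrefl zero_complex.simps(1))
  qed
  have holw: "w holomorphic_on ball 0 1"
    unfolding w_def using den by (intro holomorphic_intros holP) auto
  have w0: "w 0 = 0" by (simp add: w_def b_def)
  have wlt: "norm (w z) < 1" if z: "norm z < 1" for z
  proof -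
    have "norm (P z + 1 - b) < norm (P z + 1 + cnj b)"
    proof -
      have "Re (P z) \<ge> 0" using reP z by auto
      then show ?thesis using norm_lt_aux[of "P z + 1" b] reb by simp
    qed
    then show ?thesis using den[OF z] by (simp add: w_def norm_divide divide_less_eq)
  qed
  have wle: "norm (w z) \<le> norm z" if "norm z < 1" for z
    using Schwarz_Lemma(1)[OF holw w0 wlt that] by simp
  show ?thesis
  proof
    show "0 \<le> 2 * norm b + 1" by simp
    fix z :: complex assume z: "norm z < 1"
    define Q where "Q = P z + 1"
    have eqw: "w z * (Q + cnj b) = Q - b" using den[OF z] by (simp add: w_def Q_def)
    have "Q * (1 - w z) = b + w z * cnj b" using eqw by (simp add: algebra_simps)
    then have "norm Q * norm (1 - w z) = norm (b + w z * cnj b)" by (metis norm_mult)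
    also have "\<dots> \<le> norm b + norm (w z) * norm b" by (metis norm_triangle_ineq norm_mult complex_mod_cnj)
    also have "\<dots> \<le> 2 * norm b" using wlt[OF z] by (simp add: mult_left_le_one_le)
    finally have Qb: "norm Q * norm (1 - w z) \<le> 2 * norm b" .
    have "norm (1 - w z) \<ge> 1 - norm z" using wle[OF z] norm_triangle_ineq2[of 1 "w z"] by simp
    moreover have nz: "1 - norm z > 0" using z by simp
    ultimately have "norm Q * (1 - norm z) \<le> 2 * norm b"
      using Qb by (meson mult_left_mono norm_ge_zero order_trans)
    then have Qle: "norm Q \<le> 2 * norm b / (1 - norm z)" using nz by (simp add: le_divide_eq)
    have "norm (P z) \<le> norm Q + 1" using norm_triangle_ineq4[of Q 1] by (simp add: Q_def)
    also have "\<dots> \<le> 2 * norm b / (1 - norm z) + 1 / (1 - norm z)"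
      using Qle nz by (intro add_mono) (auto simp: le_divide_eq)
    also have "\<dots> = (2 * norm b + 1) / (1 - norm z)" by (simp add: add_divide_distrib)
    finally show "norm (P z) \<le> (2 * norm b + 1) / (1 - norm z)" .
  qed
qed



definition fd_seq :: "real \<Rightarrow> real \<Rightarrow> real \<Rightarrow> nat \<Rightarrow> complex \<Rightarrow> complex" where
  "fd_seq K \<nu> \<beta> n z = complex_of_real (delta_seq K n powr \<nu>)
      * (complex_of_real \<beta> * (complex_of_real (1 + delta_seq K n) - z) powr (complex_of_real \<beta> - 1) * (-1))"

lemma delta_pos: "K > 1 \<Longrightarrow> delta_seq K n > 0"
  by (simp add: delta_seq_def)

lemma Re_shift_pos:
  assumes "K > 1" "norm z < 1"
  shows "Re (complex_of_real (1 + delta_seq K n) - z) > 0"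
proof -
  have "Re z < 1" using assms(2) abs_Re_le_cmod[of z] by linarith
  then show ?thesis using delta_pos[OF assms(1), of n] by simp
qed

lemma f_deriv:
  assumes K: "K > 1" and z: "norm z < 1"
  shows "(f_seq K \<nu> \<beta> n has_field_derivative fd_seq K \<nu> \<beta> n z) (at z)"
proof -
  define c where "c = complex_of_real (1 + delta_seq K n)"
  have nz: "c - z \<notin> \<real>\<^sub>\<le>\<^sub>0"
  proof
    assume "c - z \<in> \<real>\<^sub>\<le>\<^sub>0"
    then obtain r where r: "c - z = complex_of_real r" "r \<le> 0" by (auto simp: nonpos_Reals_def)
    then have "Re (c - z) \<le> 0" by (simp only: Re_complex_of_real)
    then show False using Re_shift_pos[OF K z, of n] by (simp add: c_def)
  qed
  have d1: "((\<lambda>z. c - z) has_field_derivative -1) (at z)"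
    by (auto intro!: derivative_eq_intros)
  have "((\<lambda>z. (c - z) powr complex_of_real \<beta>) has_field_derivative
        (complex_of_real \<beta> * (c - z) powr (complex_of_real \<beta> - 1)) * (-1)) (at z)"
    by (rule DERIV_chain2[OF has_field_derivative_powr[OF nz] d1])
  then have "((\<lambda>z. complex_of_real (delta_seq K n powr \<nu>) * (c - z) powr complex_of_real \<beta>) has_field_derivative
        complex_of_real (delta_seq K n powr \<nu>) * ((complex_of_real \<beta> * (c - z) powr (complex_of_real \<beta> - 1)) * (-1))) (at z)"
    by (rule DERIV_cmult)
  moreover have "f_seq K \<nu> \<beta> n = (\<lambda>z. complex_of_real (delta_seq K n powr \<nu>) * (c - z) powr complex_of_real \<beta>)"
    by (simp add: fun_eq_iff f_seq_def c_def)
  moreover have "fd_seq K \<nu> \<beta> n z = complex_of_real (delta_seq K n powr \<nu>) * ((complex_of_real \<beta> * (c - z) powr (complex_of_real \<beta> - 1)) * (-1))"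
    by (simp add: fd_seq_def c_def)
  ultimately show ?thesis by simp
qed

lemma norm_f_seq:
  assumes "K > 1" "norm z < 1"
  shows "norm (f_seq K \<nu> \<beta> n z) = delta_seq K n powr \<nu> * norm (complex_of_real (1 + delta_seq K n) - z) powr \<beta>"
  by (simp add: f_seq_def norm_mult norm_powr_real_powr')

lemma norm_fd_seq:
  assumes "K > 1" "norm z < 1"
  shows "norm (fd_seq K \<nu> \<beta> n z) = \<bar>\<beta>\<bar> * (delta_seq K n powr \<nu> * norm (complex_of_real (1 + delta_seq K n) - z) powr (\<beta> - 1))"
proof -
  have "norm ((complex_of_real (1 + delta_seq K n) - z) powr (complex_of_real \<beta> - 1))
      = norm (complex_of_real (1 + delta_seq K n) - z) powr (\<beta> - 1)"
    by (subst norm_powr_real_powr') auto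
  then show ?thesis by (simp add: fd_seq_def norm_mult)
qed



lemma sum_f_bound':
  fixes K \<nu> b :: real and z :: complex
  assumes K: "K > 1" and nu: "\<nu> > 0" and e: "b + \<nu> < 0" and z: "norm z < 1"
  shows "(\<Sum>n<N. delta_seq K (Suc n) powr \<nu> *
            norm (complex_of_real (1 + delta_seq K (Suc n)) - z) powr b)
          \<le> 2 powr (-b) * (2 / (K powr (- min \<nu> (-(b+\<nu>))) * (1 - K powr (- min \<nu> (-(b+\<nu>)))))) * norm (1 - z) powr (b + \<nu>)"
  using sum_f_bound[OF K nu _ z, of "-(b+\<nu>)" N] e by (simp add: delta_seq_def add.commute[of \<nu> b])

lemma partial_bound:
  fixes X :: "nat \<Rightarrow> complex" and B :: real
  assumes "X sums s" "\<And>N. (\<Sum>n<N. norm (X n)) \<le> B"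
  shows "norm s \<le> B"
proof -
  have "(\<lambda>N. \<Sum>n<N. X n) \<longlonglongrightarrow> s" using assms(1) by (simp add: sums_def)
  then have "(\<lambda>N. norm (\<Sum>n<N. X n)) \<longlonglongrightarrow> norm s" by (rule tendsto_norm)
  moreover have "\<forall>N. norm (\<Sum>n<N. X n) \<le> B"
    using assms(2) norm_sum order_trans by blast
  ultimately show ?thesis by (intro LIMSEQ_le_const2) auto
qed

lemma X_props:
  fixes K \<nu> \<beta> :: real and h :: "complex \<Rightarrow> complex"
  assumes K: "K > 1" and nu: "\<nu> > 0" and e: "\<beta> + \<nu> < 0" and hX: "h \<in> X_space K \<nu> \<beta>"
  shows "h holomorphic_on ball 0 1 \<and>
    (\<exists>C. \<forall>z. norm z < 1 \<longrightarrow> norm (h z) \<le> C * norm (1 - z) powr (\<beta> + \<nu>)) \<and>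
    (\<exists>C. \<forall>z. norm z < 1 \<longrightarrow> norm (deriv h z) \<le> C * norm (1 - z) powr (\<beta> - 1 + \<nu>))"
proof -
  obtain a where ab: "bounded (range a)"
    and sm: "\<forall>z\<in>ball 0 1. (\<lambda>n. a (Suc n) * f_seq K \<nu> \<beta> (Suc n) z) sums h z"
    using hX by (auto simp: X_space_def)
  obtain A where A: "\<And>n. norm (a n) \<le> A" using ab by (auto simp: bounded_iff)
  have A0: "A \<ge> 0" using A[of 0] norm_ge_zero order_trans by blast
  have b0: "\<beta> < 0" using e nu by linarith
  define F where "F = (\<lambda>n z. a (Suc n) * f_seq K \<nu> \<beta> (Suc n) z)"
  define F' where "F' = (\<lambda>n z. a (Suc n) * fd_seq K \<nu> \<beta> (Suc n) z)"
  define q where "q = K powr (-\<nu>)"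
  have q0: "0 < q" using K by (simp add: q_def)
  have "K powr (-\<nu>) < K powr 0" using K nu by (intro powr_less_mono) auto
  then have q1: "q < 1" using K by (simp add: q_def)
  have dq: "delta_seq K m powr \<nu> = q ^ m" for m
  proof -
    have "q ^ m = q powr real m" using q0 by (simp add: powr_realpow)
    also have "\<dots> = K powr (- \<nu> * real m)" by (simp add: q_def powr_powr)
    finally show ?thesis by (simp add: delta_seq_def powr_powr mult.commute)
  qed
  have hfd: "\<And>n x. x \<in> ball 0 1 \<Longrightarrow> (F n has_field_derivative F' n x) (at x)"
  proof -
    fix n x assume x: "x \<in> ball (0::complex) 1"
    have "((\<lambda>z. a (Suc n) * f_seq K \<nu> \<beta> (Suc n) z) has_field_derivative a (Suc n) * fd_seq K \<nu> \<beta> (Suc n) x) (at x)"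
      using x by (intro DERIV_cmult f_deriv K) auto
    then show "(F n has_field_derivative F' n x) (at x)" by (simp add: F_def F'_def)
  qed
  have to_g: "\<exists>d hh. 0 < d \<and> summable hh \<and> (\<forall>\<^sub>F n in sequentially. \<forall>y\<in>ball x d \<inter> ball 0 1. norm (F n y) \<le> hh n)"
    if x: "x \<in> ball 0 1" for x
  proof -
    define d where "d = (1 - norm x) / 2"
    have d0: "d > 0" using x by (simp add: d_def)
    define hh where "hh = (\<lambda>n. A * d powr \<beta> * q * q ^ n)"
    have "summable hh" unfolding hh_def using q0 q1 by (intro summable_mult summable_geometric) auto
    moreover have "\<forall>n. \<forall>y\<in>ball x d \<inter> ball 0 1. norm (F n y) \<le> hh n"
    proof (intro allI ballI)
      fix n y assume y: "y \<in> ball x d \<inter> ball 0 1"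
      have ny: "norm y < 1" using y by auto
      have "norm y \<le> norm x + norm (y - x)" by (metis add.commute diff_add_cancel norm_triangle_ineq)
      moreover have "norm (y - x) < d" using y by (auto simp: dist_norm norm_minus_commute)
      moreover have "2 * d = 1 - norm x" by (simp add: d_def)
      ultimately have ny2: "1 - norm y > d" by linarith
      have "Re y \<le> norm y" by (rule complex_Re_le_cmod)
      then have "d \<le> Re (complex_of_real (1 + delta_seq K (Suc n)) - y)"
        using ny2 delta_pos[OF K, of "Suc n"] by simp
      also have "\<dots> \<le> norm (complex_of_real (1 + delta_seq K (Suc n)) - y)" by (rule complex_Re_le_cmod)
      finally have dle: "d \<le> norm (complex_of_real (1 + delta_seq K (Suc n)) - y)" .
      have "norm (F n y) = norm (a (Suc n)) * (delta_seq K (Suc n) powr \<nu> * norm (complex_of_real (1 + delta_seq K (Suc n)) - y) powr \<beta>)"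
        using norm_f_seq[OF K ny] by (simp add: F_def norm_mult)
      also have "\<dots> \<le> A * (q ^ Suc n * d powr \<beta>)"
        using A A0 dle d0 b0 q0 by (intro mult_mono) (auto simp: dq intro!: mult_left_mono powr_mono2')
      also have "\<dots> = hh n" by (simp add: hh_def mult_ac)
      finally show "norm (F n y) \<le> hh n" .
    qed
    ultimately show ?thesis using d0 by (intro exI[of _ d] exI[of _ hh]) (auto intro: always_eventually)
  qed
  obtain g g' where gg: "\<forall>x\<in>ball 0 1. ((\<lambda>n. F n x) sums g x) \<and> ((\<lambda>n. F' n x) sums g' x) \<and> (g has_field_derivative g' x) (at x)"
    using series_and_derivative_comparison_local[OF open_ball hfd to_g] by blast
  have hg: "h x = g x" if "x \<in> ball 0 1" for x
    using gg sm that unfolding F_def by (meson sums_unique2)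
  have hder: "(h has_field_derivative g' x) (at x)" if x: "x \<in> ball 0 1" for x
    using gg x hg by (intro has_field_derivative_transform_within_open[of g "g' x" x "ball 0 1" h]) auto
  have hol: "h holomorphic_on ball 0 1"
    using hder by (subst holomorphic_on_open) blast+
  define Cb where "Cb = (\<lambda>b. 2 powr (-b) * (2 / (K powr (- min \<nu> (-(b+\<nu>))) * (1 - K powr (- min \<nu> (-(b+\<nu>)))))))"
  have bnd1: "norm (h z) \<le> (A * Cb \<beta>) * norm (1 - z) powr (\<beta> + \<nu>)" if z: "norm z < 1" for z
  proof -
    have zb: "z \<in> ball 0 1" using z by simp
    show ?thesis
    proof (rule partial_bound[OF sm[rule_format, OF zb]])
      fix N
      have "(\<Sum>n<N. norm (a (Suc n) * f_seq K \<nu> \<beta> (Suc n) z))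
         \<le> (\<Sum>n<N. A * (delta_seq K (Suc n) powr \<nu> * norm (complex_of_real (1 + delta_seq K (Suc n)) - z) powr \<beta>))"
        using A by (intro sum_mono) (auto simp: norm_mult norm_f_seq[OF K z] intro!: mult_right_mono)
      also have "\<dots> = A * (\<Sum>n<N. delta_seq K (Suc n) powr \<nu> * norm (complex_of_real (1 + delta_seq K (Suc n)) - z) powr \<beta>)"
        by (simp add: sum_distrib_left)
      also have "\<dots> \<le> A * (Cb \<beta> * norm (1 - z) powr (\<beta> + \<nu>))"
        unfolding Cb_def using A0 by (intro mult_left_mono sum_f_bound' K nu e z) auto
      finally show "(\<Sum>n<N. norm (a (Suc n) * f_seq K \<nu> \<beta> (Suc n) z)) \<le> (A * Cb \<beta>) * norm (1 - z) powr (\<beta> + \<nu>)"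
        by (simp add: mult.assoc)
    qed
  qed
  have bnd2: "norm (deriv h z) \<le> (A * \<bar>\<beta>\<bar> * Cb (\<beta> - 1)) * norm (1 - z) powr (\<beta> - 1 + \<nu>)" if z: "norm z < 1" for z
  proof -
    have zb: "z \<in> ball 0 1" using z by simp
    have dh: "deriv h z = g' z" using hder[OF zb] by (rule DERIV_imp_deriv)
    show ?thesis unfolding dh
    proof (rule partial_bound)
      show "(\<lambda>n. F' n z) sums g' z" using gg zb by blast
      fix N
      have "(\<Sum>n<N. norm (F' n z))
         \<le> (\<Sum>n<N. (A * \<bar>\<beta>\<bar>) * (delta_seq K (Suc n) powr \<nu> * norm (complex_of_real (1 + delta_seq K (Suc n)) - z) powr (\<beta> - 1)))"
      proof (rule sum_mono)
        fix n
        define X where "X = delta_seq K (Suc n) powr \<nu> * norm (complex_of_real (1 + delta_seq K (Suc n)) - z) powr (\<beta> - 1)"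
        have "norm (F' n z) = norm (a (Suc n)) * (\<bar>\<beta>\<bar> * X)"
          by (simp add: F'_def norm_mult norm_fd_seq[OF K z] X_def)
        also have "\<dots> \<le> A * (\<bar>\<beta>\<bar> * X)" by (rule mult_right_mono[OF A]) (simp add: X_def)
        also have "\<dots> = (A * \<bar>\<beta>\<bar>) * X" by simp
        finally show "norm (F' n z) \<le> (A * \<bar>\<beta>\<bar>) * (delta_seq K (Suc n) powr \<nu> * norm (complex_of_real (1 + delta_seq K (Suc n)) - z) powr (\<beta> - 1))"
          by (simp add: X_def)
      qed
      also have "\<dots> = (A * \<bar>\<beta>\<bar>) * (\<Sum>n<N. delta_seq K (Suc n) powr \<nu> * norm (complex_of_real (1 + delta_seq K (Suc n)) - z) powr (\<beta> - 1))"
        by (simp add: sum_distrib_left)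
      also have "\<dots> \<le> (A * \<bar>\<beta>\<bar>) * (Cb (\<beta> - 1) * norm (1 - z) powr (\<beta> - 1 + \<nu>))"
        unfolding Cb_def using A0 e by (intro mult_left_mono sum_f_bound' K nu z) auto
      finally show "(\<Sum>n<N. norm (F' n z)) \<le> (A * \<bar>\<beta>\<bar> * Cb (\<beta> - 1)) * norm (1 - z) powr (\<beta> - 1 + \<nu>)"
        by (simp add: mult.assoc)
    qed
  qed
  show ?thesis using hol bnd1 bnd2 by blast
qed



lemma powr_cancel_aux:
  fixes x \<alpha> X :: real assumes "x > 0"
  shows "x powr \<alpha> * (X * x powr (- \<alpha>)) = X"
  using assms by (simp add: powr_minus field_simps)

lemma powr_cancel_aux2:
  fixes x \<alpha> X :: real assumes "x > 0"
  shows "x powr \<alpha> * (X / x * x powr (1 - \<alpha>)) = X"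
proof -
  have "x powr \<alpha> * x powr (1 - \<alpha>) = x" using assms by (simp add: powr_add[symmetric])
  then show ?thesis using assms by (simp add: field_simps)
qed

lemma main_inclusion:
  fixes p \<alpha> \<beta> \<nu> K :: real and P h :: "complex \<Rightarrow> complex"
  assumes p: "0 < p" and \<alpha>: "\<alpha> > 1" and nu_def: "\<nu> = - (\<alpha> + \<beta> + 1 / p)" and nu: "\<nu> > 0"
    and K: "K > 1" and holP: "P holomorphic_on ball 0 1" and reP: "\<forall>z\<in>ball 0 1. Re (P z) \<ge> 0"
    and hX: "h \<in> X_space K \<nu> \<beta>"
  shows "h \<in> E_space p \<alpha> P"
proof -
  define \<mu> where "\<mu> = \<alpha> + 1/p"
  have bn: "\<beta> + \<nu> = - \<mu>" by (simp add: nu_def \<mu>_def)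
  have bn2: "\<beta> - 1 + \<nu> = - \<mu> - 1" by (simp add: nu_def \<mu>_def)
  have e: "\<beta> + \<nu> < 0" using bn \<alpha> p by (simp add: \<mu>_def) (smt (verit) divide_pos_pos)
  have props: "h holomorphic_on ball 0 1 \<and>
    (\<exists>C. \<forall>z. norm z < 1 \<longrightarrow> norm (h z) \<le> C * norm (1 - z) powr (\<beta> + \<nu>)) \<and>
    (\<exists>C. \<forall>z. norm z < 1 \<longrightarrow> norm (deriv h z) \<le> C * norm (1 - z) powr (\<beta> - 1 + \<nu>))"
    by (rule X_props[OF K nu e hX])
  then have hol: "h holomorphic_on ball 0 1" by blast
  from props obtain C1 where C1: "\<And>z. norm z < 1 \<Longrightarrow> norm (h z) \<le> C1 * norm (1 - z) powr (- \<mu>)"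
    unfolding bn by blast
  from props obtain C2 where C2: "\<And>z. norm z < 1 \<Longrightarrow> norm (deriv h z) \<le> C2 * norm (1 - z) powr (- \<mu> - 1)"
    unfolding bn2 by blast
  define A1 where "A1 = max C1 0"
  define A2 where "A2 = max C2 0"
  have A1: "norm (h z) \<le> A1 * norm (1 - z) powr (- \<mu>)" if "norm z < 1" for z
    using C1[OF that] unfolding A1_def by (smt (verit) mult_right_mono powr_ge_zero)
  have A2: "norm (deriv h z) \<le> A2 * norm (1 - z) powr (- \<mu> - 1)" if "norm z < 1" for z
    using C2[OF that] unfolding A2_def by (smt (verit) mult_right_mono powr_ge_zero)
  have A10: "A1 \<ge> 0" and A20: "A2 \<ge> 0" by (auto simp: A1_def A2_def)
  obtain CP where CP0: "CP \<ge> 0" and CP: "\<And>z. norm z < 1 \<Longrightarrow> norm (P z) \<le> CP / (1 - norm z)"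
    using P_bound[OF holP reP] by blast
  have mup: "\<mu> * p > 1"
  proof -
    have "\<mu> * p = \<alpha> * p + 1" using p by (simp add: \<mu>_def field_simps)
    then show ?thesis using \<alpha> p by (simp add: mult_pos_pos)
  qed
  have mup2: "(\<mu> - 1) * p > 1"
  proof -
    have "(\<mu> - 1) * p = (\<alpha> - 1) * p + 1" using p by (simp add: \<mu>_def field_simps)
    then show ?thesis using \<alpha> p by (simp add: mult_pos_pos)
  qed
  have circ: "norm (complex_of_real r * cis \<theta>) < 1" if "0 \<le> r" "r < 1" for r \<theta>
    using that by (simp add: norm_mult)
  define K1 where "K1 = (3 powr (\<mu>*p) * (6/(\<mu>*p-1)) / (2*pi)) powr (1/p)"
  define K2 where "K2 = (3 powr ((\<mu>-1)*p) * (6/((\<mu>-1)*p-1)) / (2*pi)) powr (1/p)"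
  have "h \<in> H_p_inf p \<alpha>"
    unfolding H_p_inf_def
  proof (intro CollectI conjI hol exI allI impI)
    fix r :: real assume r: "0 \<le> r \<and> r < 1"
    have "Mp p r h \<le> A1 * K1 * (1 - r) powr (1/p - \<mu>)"
      unfolding K1_def using r by (intro Mp_bound p mup A10 A1 circ) auto
    also have "1/p - \<mu> = - \<alpha>" by (simp add: \<mu>_def)
    finally have "(1 - r) powr \<alpha> * Mp p r h \<le> (1 - r) powr \<alpha> * (A1 * K1 * (1 - r) powr (- \<alpha>))"
      by (intro mult_left_mono) auto
    also have "\<dots> = A1 * K1" using r by (intro powr_cancel_aux) auto
    finally show "(1 - r) powr \<alpha> * Mp p r h \<le> A1 * K1" .
  qed
  moreover have "(\<lambda>z. (1 - z)^2 * P z * deriv h z) \<in> H_p_inf p \<alpha>"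
    unfolding H_p_inf_def
  proof (intro CollectI conjI exI allI impI)
    show "(\<lambda>z. (1 - z)^2 * P z * deriv h z) holomorphic_on ball 0 1"
      by (intro holomorphic_intros holP holomorphic_deriv hol) auto
    fix r :: real assume r: "0 \<le> r \<and> r < 1"
    have r1: "1 - r > 0" using r by simp
    have bnd: "norm ((1 - z)^2 * P z * deriv h z) \<le> (CP * A2 / (1 - r)) * norm (1 - z) powr (- (\<mu> - 1))"
      if z: "z = complex_of_real r * cis \<theta>" for \<theta> z
    proof -
      have nz: "norm z = r" using z r by (simp add: norm_mult)
      have z1: "norm z < 1" using nz r by simp
      have n1: "norm (1 - z) > 0" using z1 by auto
      have "norm ((1 - z)^2 * P z * deriv h z) = norm (1 - z)^2 * norm (P z) * norm (deriv h z)"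
        by (simp add: norm_mult norm_power)
      also have "\<dots> \<le> norm (1 - z)^2 * (CP / (1 - r)) * (A2 * norm (1 - z) powr (- \<mu> - 1))"
        using CP[OF z1] A2[OF z1] nz CP0 r1 by (intro mult_mono mult_left_mono) auto
      also have "\<dots> = (CP * A2 / (1 - r)) * (norm (1 - z) powr 2 * norm (1 - z) powr (- \<mu> - 1))"
      proof -
        have pw: "norm (1 - z)^2 = norm (1 - z) powr 2" using powr_realpow[of "norm (1 - z)" 2] n1 by simp
        show ?thesis by (simp only: pw) (simp add: mult_ac)
      qed
      also have "norm (1 - z) powr 2 * norm (1 - z) powr (- \<mu> - 1) = norm (1 - z) powr (- (\<mu> - 1))"
      proof -
        have ex: "2 + (- \<mu> - 1) = - (\<mu> - 1)" by simp
        show ?thesis by (simp only: powr_add[symmetric] ex)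
      qed
      finally show ?thesis .
    qed
    have "Mp p r (\<lambda>z. (1 - z)^2 * P z * deriv h z) \<le> (CP * A2 / (1 - r)) * K2 * (1 - r) powr (1/p - (\<mu> - 1))"
      unfolding K2_def using r CP0 A20 r1 by (intro Mp_bound p mup2 bnd) auto
    also have "1/p - (\<mu> - 1) = 1 - \<alpha>" by (simp add: \<mu>_def)
    finally have "(1 - r) powr \<alpha> * Mp p r (\<lambda>z. (1 - z)^2 * P z * deriv h z)
        \<le> (1 - r) powr \<alpha> * ((CP * A2 * K2) / (1 - r) * (1 - r) powr (1 - \<alpha>))"
      by (intro mult_left_mono) (auto simp: field_simps)
    also have "\<dots> = CP * A2 * K2" using r1 by (rule powr_cancel_aux2)
    finally show "(1 - r) powr \<alpha> * Mp p r (\<lambda>z. (1 - z)^2 * P z * deriv h z) \<le> CP * A2 * K2" .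
  qed
  ultimately show ?thesis by (simp add: E_space_def)
qed

theorem proposition6p8:
  fixes p \<alpha> \<beta> \<nu> :: real
  assumes "0 < p" and "\<alpha> > 1" and "\<beta> * p < -1"
    and "\<nu> = - (\<alpha> + \<beta> + 1 / p)" and "\<nu> > 0"
  shows "\<exists>K0>1. \<forall>K\<ge>K0. \<forall>(\<phi> :: real \<Rightarrow> complex \<Rightarrow> complex) (P :: complex \<Rightarrow> complex).
           analytic_semigroup \<phi> \<and> denjoy_wolff_point \<phi> 1 \<and>
           P holomorphic_on unit_disc \<and> (\<forall>z\<in>unit_disc. Re (P z) \<ge> 0) \<and>
           infinitesimal_generator \<phi> (\<lambda>z. (1 - z)^2 * P z)
           \<longrightarrow> X_space K \<nu> \<beta> \<subseteq> E_space p \<alpha> P"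
proof (intro exI[of _ 2] conjI allI impI subsetI)
  show "(1::real) < 2" by simp
  fix K :: real and \<phi> :: "real \<Rightarrow> complex \<Rightarrow> complex" and P :: "complex \<Rightarrow> complex" and h
  assume K: "K \<ge> 2"
    and H: "analytic_semigroup \<phi> \<and> denjoy_wolff_point \<phi> 1 \<and>
           P holomorphic_on unit_disc \<and> (\<forall>z\<in>unit_disc. Re (P z) \<ge> 0) \<and>
           infinitesimal_generator \<phi> (\<lambda>z. (1 - z)^2 * P z)"
    and hX: "h \<in> X_space K \<nu> \<beta>"
  show "h \<in> E_space p \<alpha> P"
    using H hX K assms by (intro main_inclusion[where \<beta> = \<beta> and \<nu> = \<nu> and K = K]) auto
qed


end
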